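(* Let $\mathcal A=(Q,\Sigma,\delta,\rho)$ be a connected bireversible Mealy automaton whose labeled orbit tree $\mathfrak t(\mathcal A)$ has no active self-liftable branch, and let $\mathfrak j$ be a jungle tree with trunk of length $n$. For a $\mathfrak j$-word $\mathbf u$ with $|\mathbf u|<n$, the number of $\sim$-classes of stems containing a stem with prefix $\mathbf u$ depends only on $|\mathbf u|$: any two $\mathfrak j$-words of the same length $<n$ have the same number of such classes.
   Context: Mealy automata. A Mealy automaton is $\mathcal A=(Q,\Sigma,\delta,\rho)$ with $Q,\Sigma$ finite non-empty sets, $\delta=(\delta_i\colon Q\to Q)_{i\in\Sigma}$, $\rho=(\rho_x\colon\Sigma\to\Sigma)_{x\in Q}$; transitions $x\xrightarrow{i\mid\rho_x(i)}\delta_i(x)$. Invertible: each $\rho_x$ a permutation of $\Sigma$; reversible: each $\delta_i$ a permutation of $Q$; bireversible: invertible, reversible, and for each $j\in\Sigma$ the map $x\mapsto\delta_{\rho_x^{-1}(j)}(x)$ is a permutation of $Q$. Connected: the directed graph on $Q$ with edges $x\to\delta_i(x)$ is connected. Extensions: $\rho_x(i\mathbf s)=\rho_x(i)\rho_{\delta_i(x)}(\mathbf s)$; $\rho_{x_1\cdots x_m}=\rho_{x_m}\circ\cdots\circ\rho_{x_1}$; $\delta_i(x\mathbf u)=\delta_i(x)\delta_{\rho_x(i)}(\mathbf u)$ on $Q^*$, $\delta_{i_1\cdots i_m}=\delta_{i_m}\circ\cdots\circ\delta_{i_1}$. The connected components of $\mathcal A^n$ (stateset $Q^n$, transitions $\mathbf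 u\xrightarrow{i\mid\rho_{\mathbf u}(i)}\delta_i(\mathbf u)$) are, for reversible $\mathcal A$, the orbits of $Q^n$ under the maps $\delta_{\mathbf s}$. Orbit tree $\mathfrak t(\mathcal A)$: vertices at level $n\ge0$ are the connected components of $\mathcal A^n$; an edge from the component of $\mathbf u\in Q^n$ to that of $\mathbf ux$ for all $\mathbf u,x$; edge $C\to D$ labeled $\#D/\#C$. $\top,\bot$ = first/last vertex of a downward path; level of an edge/path = level of its top vertex. A word of $Q^*\cup Q^\omega$ represents the initial path through the components of its prefixes. Edge $e$ is liftable to $f$ if every word of $\bot(e)$ has a suffix in $\bot(f)$; paths are liftable if corresponding edges are. $f$ is a legitimate child of $e$ if $\top(f)=\bot(e)$ and $f$ is liftable to $e$. A path/subtree $\mathfrak s$ is $k$-self-liftable if for all $i\ge0$ every path in $\mathfrak s$ starting at level $i+k$ is liftable to a path in $\mathfrak s$ starting at level $i$; self-liftable if $k$-self-liftable for some $k>0$. A branch (infinite initial path) is active if its labels are not eventually all $1$. Jungle trees: for a finite 1-self-liftable initial path $\mathbf e$ of length $n$ whose last edge has at least two legitimate children, all labeled $1$, $\mathfrak j(\mathbf e)$ consists of $\mathbf e$ plus all edges descending from $\bot(\mathbf e)$ that are liftable to the last edge of $\mathbf e$. Stems: the words of $\bot(\mathbf e)\subseteq Q^n$. A $\mathfrak j$-word is a word representing an initial path of $\mathfrak j$. For stems $\mathbf u,\mathbf v$: $\mathbf u\sim\mathbf v$ iff there is $\mathbf s\in Q^*$ such that $\mathbf{usv}$ is a $\mathfrak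 j$-word and $\rho_{\mathbf{us}}$ is the identity of $\Sigma^*$; $\sim$ is an equivalence relation. *)

theory Defs
  imports Complex_Main "HOL-Library.Sublist"
begin

text \<open>A Mealy automaton with stateset the finite type 'q and alphabet the finite type 'a
  is given by delta :: 'a => 'q => 'q (delta i x = target of the transition from x
  reading i) and rho :: 'q => 'a => 'a (rho x i = output).\<close>

definition invertible :: "('q \<Rightarrow> 'a \<Rightarrow> 'a) \<Rightarrow> bool" where
  "invertible rho \<longleftrightarrow> (\<forall>x. bij (rho x))"

definition reversible :: "('a \<Rightarrow> 'q \<Rightarrow> 'q) \<Rightarrow> bool" where
  "reversible delta \<longleftrightarrow> (\<forall>i. bij (delta i))"

definition bireversible :: "('a \<Rightarrow> 'q \<Rightarrow> 'q) \<Rightarrow> ('q \<Rightarrow> 'a \<Rightarrow> 'a) \<Rightarrow> bool" where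
  "bireversible delta rho \<longleftrightarrow> invertible rho \<and> reversible delta \<and>
     (\<forall>j. bij (\<lambda>x. delta (inv (rho x) j) x))"

definition connected_aut :: "('a \<Rightarrow> 'q \<Rightarrow> 'q) \<Rightarrow> bool" where
  "connected_aut delta \<longleftrightarrow>
     (let E = {(x, delta i x) | x i. True} in \<forall>x y. (x, y) \<in> (E \<union> E\<inverse>)\<^sup>*)"

fun rhoS :: "('a \<Rightarrow> 'q \<Rightarrow> 'q) \<Rightarrow> ('q \<Rightarrow> 'a \<Rightarrow> 'a) \<Rightarrow> 'q \<Rightarrow> 'a list \<Rightarrow> 'a list" where
  "rhoS delta rho x [] = []"
| "rhoS delta rho x (i # s) = rho x i # rhoS delta rho (delta i x) s"

fun rhoQ :: "('a \<Rightarrow> 'q \<Rightarrow> 'q) \<Rightarrow> ('q \<Rightarrow> 'a \<Rightarrow> 'a) \<Rightarrow> 'q list \<Rightarrow> 'a list \<Rightarrow> 'a list" where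
  "rhoQ delta rho [] = id"
| "rhoQ delta rho (x # u) = rhoQ delta rho u \<circ> rhoS delta rho x"

fun deltaQ :: "('a \<Rightarrow> 'q \<Rightarrow> 'q) \<Rightarrow> ('q \<Rightarrow> 'a \<Rightarrow> 'a) \<Rightarrow> 'a \<Rightarrow> 'q list \<Rightarrow> 'q list" where
  "deltaQ delta rho i [] = []"
| "deltaQ delta rho i (x # u) = delta i x # deltaQ delta rho (rho x i) u"

definition comp :: "('a \<Rightarrow> 'q \<Rightarrow> 'q) \<Rightarrow> ('q \<Rightarrow> 'a \<Rightarrow> 'a) \<Rightarrow> 'q list \<Rightarrow> 'q list set" where
  "comp delta rho u =
     (let E = {(v, deltaQ delta rho i v) | v i. True} in {w. (u, w) \<in> (E \<union> E\<inverse>)\<^sup>*})"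

text \<open>Edges of the orbit tree: pairs (top, bottom) of components.\<close>
type_synonym 'q edge = "'q list set \<times> 'q list set"

definition tree_edge :: "('a \<Rightarrow> 'q \<Rightarrow> 'q) \<Rightarrow> ('q \<Rightarrow> 'a \<Rightarrow> 'a) \<Rightarrow> 'q edge \<Rightarrow> bool" where
  "tree_edge delta rho e \<longleftrightarrow>
     (\<exists>u x. e = (comp delta rho u, comp delta rho (u @ [x])))"

definition label :: "'q edge \<Rightarrow> real" where
  "label e = real (card (snd e)) / real (card (fst e))"

text \<open>Level of a vertex (all its words have the same length).\<close>
definition vlevel :: "'q list set \<Rightarrow> nat" where
  "vlevel C = length (SOME u. u \<in> C)"

definition edge_liftable :: "'q edge \<Rightarrow> 'q edge \<Rightarrow> bool" where
  "edge_liftable e f \<longleftrightarrow> (\<forall>w \<in> snd e. \<exists>w'. suffix w' w \<and> w' \<in> snd f)"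

definition path_liftable :: "'q edge list \<Rightarrow> 'q edge list \<Rightarrow> bool" where
  "path_liftable p p' \<longleftrightarrow> length p = length p' \<and>
     (\<forall>j < length p. edge_liftable (p ! j) (p' ! j))"

definition path_in :: "('a \<Rightarrow> 'q \<Rightarrow> 'q) \<Rightarrow> ('q \<Rightarrow> 'a \<Rightarrow> 'a) \<Rightarrow> 'q edge set \<Rightarrow> nat
    \<Rightarrow> 'q edge list \<Rightarrow> bool" where
  "path_in delta rho S i p \<longleftrightarrow> p \<noteq> [] \<and> set p \<subseteq> S \<and>
     (\<forall>e \<in> set p. tree_edge delta rho e) \<and>
     (\<forall>j. Suc j < length p \<longrightarrow> snd (p ! j) = fst (p ! Suc j)) \<and>
     vlevel (fst (hd p)) = i"

definition self_liftable_k :: "('a \<Rightarrow> 'q \<Rightarrow> 'q) \<Rightarrow> ('q \<Rightarrow> 'a \<Rightarrow> 'a) \<Rightarrow> nat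
    \<Rightarrow> 'q edge set \<Rightarrow> bool" where
  "self_liftable_k delta rho k S \<longleftrightarrow>
     (\<forall>i p. path_in delta rho S (i + k) p \<longrightarrow>
        (\<exists>p'. path_in delta rho S i p' \<and> path_liftable p p'))"

definition self_liftable :: "('a \<Rightarrow> 'q \<Rightarrow> 'q) \<Rightarrow> ('q \<Rightarrow> 'a \<Rightarrow> 'a)
    \<Rightarrow> 'q edge set \<Rightarrow> bool" where
  "self_liftable delta rho S \<longleftrightarrow> (\<exists>k > 0. self_liftable_k delta rho k S)"

definition branch :: "('a \<Rightarrow> 'q \<Rightarrow> 'q) \<Rightarrow> ('q \<Rightarrow> 'a \<Rightarrow> 'a) \<Rightarrow> (nat \<Rightarrow> 'q edge) \<Rightarrow> bool" where
  "branch delta rho b \<longleftrightarrow> fst (b 0) = {[]} \<and> (\<forall>m. tree_edge delta rho (b m)) \<and>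
     (\<forall>m. snd (b m) = fst (b (Suc m)))"

definition active :: "(nat \<Rightarrow> 'q edge) \<Rightarrow> bool" where
  "active b \<longleftrightarrow> (\<forall>N. \<exists>m \<ge> N. label (b m) \<noteq> 1)"

definition no_active_self_liftable_branch :: "('a \<Rightarrow> 'q \<Rightarrow> 'q) \<Rightarrow> ('q \<Rightarrow> 'a \<Rightarrow> 'a) \<Rightarrow> bool" where
  "no_active_self_liftable_branch delta rho \<longleftrightarrow>
     \<not> (\<exists>b. branch delta rho b \<and> active b \<and> self_liftable delta rho (range b))"

definition initial_path :: "('a \<Rightarrow> 'q \<Rightarrow> 'q) \<Rightarrow> ('q \<Rightarrow> 'a \<Rightarrow> 'a) \<Rightarrow> 'q edge list \<Rightarrow> bool" where
  "initial_path delta rho p \<longleftrightarrow> path_in delta rho UNIV 0 p \<and> fst (hd p) = {[]}"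

definition legit_child :: "('a \<Rightarrow> 'q \<Rightarrow> 'q) \<Rightarrow> ('q \<Rightarrow> 'a \<Rightarrow> 'a) \<Rightarrow> 'q edge \<Rightarrow> 'q edge \<Rightarrow> bool" where
  "legit_child delta rho e f \<longleftrightarrow> tree_edge delta rho f \<and> fst f = snd e \<and> edge_liftable f e"

definition jungle_trunk :: "('a \<Rightarrow> 'q \<Rightarrow> 'q) \<Rightarrow> ('q \<Rightarrow> 'a \<Rightarrow> 'a) \<Rightarrow> 'q edge list \<Rightarrow> nat \<Rightarrow> bool" where
  "jungle_trunk delta rho e n \<longleftrightarrow> length e = n \<and> initial_path delta rho e \<and>
     self_liftable_k delta rho 1 (set e) \<and>
     (\<exists>f g. f \<noteq> g \<and> legit_child delta rho (last e) f \<and> legit_child delta rho (last e) g) \<and>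
     (\<forall>f. legit_child delta rho (last e) f \<longrightarrow> label f = 1)"

definition jungle_edges :: "('a \<Rightarrow> 'q \<Rightarrow> 'q) \<Rightarrow> ('q \<Rightarrow> 'a \<Rightarrow> 'a) \<Rightarrow> 'q edge list \<Rightarrow> 'q edge set" where
  "jungle_edges delta rho e = set e \<union>
     {f. tree_edge delta rho f \<and> (\<exists>w \<in> fst f. \<exists>v \<in> snd (last e). prefix v w) \<and>
         edge_liftable f (last e)}"

definition jword :: "('a \<Rightarrow> 'q \<Rightarrow> 'q) \<Rightarrow> ('q \<Rightarrow> 'a \<Rightarrow> 'a) \<Rightarrow> 'q edge list \<Rightarrow> 'q list \<Rightarrow> bool" where
  "jword delta rho e w \<longleftrightarrow>
     (\<forall>k < length w. (comp delta rho (take k w), comp delta rho (take (Suc k) w))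
                        \<in> jungle_edges delta rho e)"

definition stems :: "'q edge list \<Rightarrow> 'q list set" where
  "stems e = snd (last e)"

definition stem_sim :: "('a \<Rightarrow> 'q \<Rightarrow> 'q) \<Rightarrow> ('q \<Rightarrow> 'a \<Rightarrow> 'a) \<Rightarrow> 'q edge list \<Rightarrow> 'q list rel" where
  "stem_sim delta rho e = {(u, v). u \<in> stems e \<and> v \<in> stems e \<and>
     (\<exists>s. jword delta rho e (u @ s @ v) \<and> (\<forall>t. rhoQ delta rho (u @ s) t = t))}"

definition num_classes :: "('a \<Rightarrow> 'q \<Rightarrow> 'q) \<Rightarrow> ('q \<Rightarrow> 'a \<Rightarrow> 'a) \<Rightarrow> 'q edge list \<Rightarrow> 'q list \<Rightarrow> nat" where
  "num_classes delta rho e u =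
     card {K \<in> stems e // stem_sim delta rho e. \<exists>w \<in> K. prefix u w}"

end

theory Submission
  imports Defs
begin

lemma len_deltaQ[simp]: "length (deltaQ delta rho i w) = length w"
  by (induction w arbitrary: i) auto

lemma len_rhoS[simp]: "length (rhoS delta rho x t) = length t"
  by (induction t arbitrary: x) auto

lemma len_rhoQ[simp]: "length (rhoQ delta rho w t) = length t"
  by (induction w arbitrary: t) auto

lemma deltaQ_append:
  "deltaQ delta rho i (a @ b) = deltaQ delta rho i a @ deltaQ delta rho (hd (rhoQ delta rho a [i])) b"
  by (induction a arbitrary: i) auto

lemma rhoQ_cons:
  "rhoQ delta rho w (i # t) = hd (rhoQ delta rho w [i]) # rhoQ delta rho (deltaQ delta rho i w) t"
proof (induction w arbitrary: i t)
  case Nil then show ?case by simp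
next
  case (Cons x w)
  have "rhoQ delta rho (x # w) (i # t) = rhoQ delta rho w (rho x i # rhoS delta rho (delta i x) t)"
    by simp
  also have "\<dots> = hd (rhoQ delta rho w [rho x i]) # rhoQ delta rho (deltaQ delta rho (rho x i) w) (rhoS delta rho (delta i x) t)"
    by (rule Cons.IH)
  finally show ?case by simp
qed

lemma take_deltaQ: "take k (deltaQ delta rho i w) = deltaQ delta rho i (take k w)"
  by (induction w arbitrary: i k) (auto simp: take_Cons split: nat.splits)

lemma inj_deltaQ:
  assumes "reversible delta"
  shows "inj (deltaQ delta rho i)"
proof -
  have "\<And>a b i. deltaQ delta rho i a = deltaQ delta rho i b \<Longrightarrow> a = b"
  proof -
    fix a b i
    show "deltaQ delta rho i a = deltaQ delta rho i b \<Longrightarrow> a = b"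
    proof (induction a arbitrary: b i)
      case Nil then show ?case by (cases b) auto
    next
      case (Cons x a)
      then obtain y b' where b: "b = y # b'" by (cases b) auto
      with Cons.prems have "delta i x = delta i y" by simp
      then have "x = y" using assms unfolding reversible_def by (meson bij_def injD)
      with Cons b show ?case by auto
    qed
  qed
  then show ?thesis by (meson injI)
qed

definition EE :: "('a \<Rightarrow> 'q \<Rightarrow> 'q) \<Rightarrow> ('q \<Rightarrow> 'a \<Rightarrow> 'a) \<Rightarrow> 'q list rel" where
  "EE delta rho = (let E = {(v, deltaQ delta rho i v) | v i. True} in (E \<union> E\<inverse>)\<^sup>*)"

lemma comp_EE: "Defs.comp delta rho u = {w. (u, w) \<in> EE delta rho}"
  unfolding Defs.comp_def EE_def by (simp add: Let_def)

lemma EE_sym: "(x, y) \<in> EE delta rho \<Longrightarrow> (y, x) \<in> EE delta rho"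
proof -
  let ?E = "{(v, deltaQ delta rho i v) | v i. True}"
  assume "(x, y) \<in> EE delta rho"
  then have "(x, y) \<in> (?E \<union> ?E\<inverse>)\<^sup>*" unfolding EE_def by (simp add: Let_def)
  then have "(y, x) \<in> ((?E \<union> ?E\<inverse>)\<inverse>)\<^sup>*" by (simp add: rtrancl_converse)
  moreover have "(?E \<union> ?E\<inverse>)\<inverse> = ?E \<union> ?E\<inverse>" by blast
  ultimately show ?thesis unfolding EE_def by (simp add: Let_def)
qed

lemma EE_trans: "(x, y) \<in> EE delta rho \<Longrightarrow> (y, z) \<in> EE delta rho \<Longrightarrow> (x, z) \<in> EE delta rho"
  unfolding EE_def by (simp add: Let_def)

lemma EE_refl: "(x, x) \<in> EE delta rho"
  unfolding EE_def by (simp add: Let_def)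

lemma EE_step: "(x, deltaQ delta rho i x) \<in> EE delta rho"
  unfolding EE_def Let_def by (rule r_into_rtrancl) blast

lemma comp_eq: "(x, y) \<in> EE delta rho \<Longrightarrow> Defs.comp delta rho x = Defs.comp delta rho y"
  unfolding comp_EE using EE_sym EE_trans by blast

lemma comp_deltaQ: "Defs.comp delta rho (deltaQ delta rho i x) = Defs.comp delta rho x"
  using comp_eq[OF EE_step] by metis

lemma self_comp: "x \<in> Defs.comp delta rho x"
  unfolding comp_EE using EE_refl by blast

lemma EE_len: "(x, y) \<in> EE delta rho \<Longrightarrow> length y = length x"
proof -
  let ?E = "{(v, deltaQ delta rho i v) | v i. True}"
  assume "(x, y) \<in> EE delta rho"
  then have "(x, y) \<in> (?E \<union> ?E\<inverse>)\<^sup>*" unfolding EE_def by (simp add: Let_def)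
  then show ?thesis by (induction rule: rtrancl_induct) auto
qed

lemma comp_len: "w \<in> Defs.comp delta rho x \<Longrightarrow> length w = length x"
  unfolding comp_EE using EE_len by blast

lemma jword_deltaQ: "jword delta rho e w \<Longrightarrow> jword delta rho e (deltaQ delta rho i w)"
  unfolding jword_def by (simp add: take_deltaQ comp_deltaQ)

lemma period:
  assumes "inj (f :: 'q::finite list \<Rightarrow> 'q list)" and "\<And>v. length (f v) = length v"
  shows "\<exists>p>0. (f ^^ p) w = w"
proof -
  have fin: "finite {v :: 'q list. length v = length w}"
    using finite_lists_length_eq[OF finite_UNIV[where 'a='q], of "length w"] by simp
  have "\<And>k. (f ^^ k) w \<in> {v. length v = length w}"
  proof -
    fix k show "(f ^^ k) w \<in> {v. length v = length w}"
      by (induction k) (auto simp: assms(2))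
  qed
  then have "(\<lambda>k. (f ^^ k) w) ` UNIV \<subseteq> {v. length v = length w}" by blast
  then have "finite ((\<lambda>k. (f ^^ k) w) ` UNIV)" using fin finite_subset by blast
  then have "\<not> inj (\<lambda>k. (f ^^ k) w)" using finite_imageD infinite_UNIV_nat by blast
  then obtain a b where ab: "a \<noteq> b" "(f ^^ a) w = (f ^^ b) w" unfolding inj_def by blast
  have "\<exists>a b. a < b \<and> (f ^^ a) w = (f ^^ b) w"
    using ab by (metis linorder_neqE_nat)
  then obtain a b where ab2: "a < b" "(f ^^ a) w = (f ^^ b) w" by blast
  have bb: "b = a + (b - a)" using ab2(1) by simp
  have "(f ^^ (a + (b - a))) w = (f ^^ a) ((f ^^ (b - a)) w)" by (simp add: funpow_add)
  then have "(f ^^ b) w = (f ^^ a) ((f ^^ (b - a)) w)" using bb by simp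
  with ab2 have "(f ^^ a) ((f ^^ (b - a)) w) = (f ^^ a) w" by simp
  moreover have "inj (f ^^ a)" using assms(1) by (simp add: inj_fn)
  ultimately have "(f ^^ (b - a)) w = w" by (meson injD)
  then show ?thesis using ab2(1) by (intro exI[of _ "b - a"]) auto
qed

lemma funpow_fix: "(f ^^ p) w = w \<Longrightarrow> ((f ^^ p) ^^ k) w = w"
  by (induction k) auto

lemma period2:
  assumes "inj (f :: 'q::finite list \<Rightarrow> 'q list)" and "\<And>v. length (f v) = length v"
  shows "\<exists>p>0. (f ^^ p) w1 = w1 \<and> (f ^^ p) w2 = w2"
proof -
  obtain p1 where p1: "p1 > 0" "(f ^^ p1) w1 = w1" using period[OF assms] by blast
  obtain p2 where p2: "p2 > 0" "(f ^^ p2) w2 = w2" using period[OF assms] by blast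
  have "((f ^^ p1) ^^ p2) w1 = w1" using p1 funpow_fix by metis
  then have a: "(f ^^ (p1 * p2)) w1 = w1" by (simp add: funpow_mult)
  have "((f ^^ p2) ^^ p1) w2 = w2" using p2 funpow_fix by metis
  then have "(f ^^ (p2 * p1)) w2 = w2" by (simp add: funpow_mult)
  then have b: "(f ^^ (p1 * p2)) w2 = w2" by (simp add: mult.commute)
  have "p1 * p2 > 0" using p1 p2 by simp
  with a b show ?thesis by blast
qed


lemma prefix_deltaQ:
  assumes "reversible delta"
  shows "prefix (deltaQ delta rho i u) (deltaQ delta rho i w) \<longleftrightarrow> prefix u w"
proof
  assume "prefix u w"
  then obtain zs where "w = u @ zs" unfolding prefix_def by blast
  then show "prefix (deltaQ delta rho i u) (deltaQ delta rho i w)"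
    by (simp add: deltaQ_append)
next
  assume "prefix (deltaQ delta rho i u) (deltaQ delta rho i w)"
  then obtain zs where "deltaQ delta rho i w = deltaQ delta rho i u @ zs" unfolding prefix_def by blast
  then have "take (length u) (deltaQ delta rho i w) = deltaQ delta rho i u" by simp
  then have "deltaQ delta rho i (take (length u) w) = deltaQ delta rho i u" by (simp add: take_deltaQ)
  then have "take (length u) w = u" using inj_deltaQ[OF assms] by (meson injD)
  then show "prefix u w" by (metis take_is_prefix)
qed

lemma sim_fwd:
  assumes S: "stems e = Defs.comp delta rho z"
    and R: "(a, b) \<in> stem_sim delta rho e"
  shows "(deltaQ delta rho i a, deltaQ delta rho i b) \<in> stem_sim delta rho e"
proof -
  have cl: "\<And>x. x \<in> stems e \<Longrightarrow> deltaQ delta rho i x \<in> stems e"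
  proof -
    fix x assume "x \<in> stems e"
    then have "(z, x) \<in> EE delta rho" unfolding S comp_EE by simp
    then have "(z, deltaQ delta rho i x) \<in> EE delta rho" by (rule EE_trans[OF _ EE_step])
    then show "deltaQ delta rho i x \<in> stems e" unfolding S comp_EE by simp
  qed
  from R obtain s where ab: "a \<in> stems e" "b \<in> stems e" "jword delta rho e (a @ s @ b)"
     and id: "\<forall>t. rhoQ delta rho (a @ s) t = t"
    unfolding stem_sim_def by blast
  define s' where "s' = deltaQ delta rho (hd (rhoQ delta rho a [i])) s"
  have das: "deltaQ delta rho i (a @ s) = deltaQ delta rho i a @ s'"
    unfolding s'_def by (rule deltaQ_append)
  have hi: "hd (rhoQ delta rho (a @ s) [i]) = i" using id by simp
  have "deltaQ delta rho i ((a @ s) @ b) = deltaQ delta rho i (a @ s) @ deltaQ delta rho (hd (rhoQ delta rho (a @ s) [i])) b"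
    by (rule deltaQ_append)
  then have eq: "deltaQ delta rho i (a @ s @ b) = deltaQ delta rho i a @ s' @ deltaQ delta rho i b"
    unfolding hi das by simp
  have jw: "jword delta rho e (deltaQ delta rho i a @ s' @ deltaQ delta rho i b)"
    using jword_deltaQ[OF ab(3), of i] unfolding eq .
  have idd: "\<forall>t. rhoQ delta rho (deltaQ delta rho i a @ s') t = t"
  proof
    fix t
    have "rhoQ delta rho (a @ s) (i # t) = hd (rhoQ delta rho (a @ s) [i]) # rhoQ delta rho (deltaQ delta rho i (a @ s)) t"
      by (rule rhoQ_cons)
    then have "i # t = i # rhoQ delta rho (deltaQ delta rho i (a @ s)) t" unfolding hi using id by simp
    then show "rhoQ delta rho (deltaQ delta rho i a @ s') t = t" unfolding das by simp
  qed
  show ?thesis unfolding stem_sim_def using jw idd cl[OF ab(1)] cl[OF ab(2)] by blast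
qed

lemma sim_fwdk:
  assumes S: "stems e = Defs.comp delta rho z"
  shows "(a, b) \<in> stem_sim delta rho e \<Longrightarrow>
    ((deltaQ delta rho i ^^ k) a, (deltaQ delta rho i ^^ k) b) \<in> stem_sim delta rho e"
  by (induction k) (simp_all add: sim_fwd[OF S])

lemma classes_inv:
  fixes delta :: "'a \<Rightarrow> 'q::finite \<Rightarrow> 'q"
  assumes rev: "reversible delta" and S: "stems e = Defs.comp delta rho z"
  shows "num_classes delta rho e (deltaQ delta rho i u) = num_classes delta rho e u"
proof -
  define D where "D = deltaQ delta rho i"
  define R where "R = stem_sim delta rho e"
  define SS where "SS = stems e"
  have injD: "inj D" unfolding D_def using inj_deltaQ[OF rev] .
  have lenD: "\<And>v. length (D v) = length v" unfolding D_def by simp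
  have cl: "\<And>x. x \<in> SS \<Longrightarrow> D x \<in> SS"
  proof -
    fix x assume "x \<in> SS"
    then have "(z, x) \<in> EE delta rho" unfolding SS_def S comp_EE by simp
    then have "(z, deltaQ delta rho i x) \<in> EE delta rho" by (rule EE_trans[OF _ EE_step])
    then show "D x \<in> SS" unfolding SS_def D_def S comp_EE by simp
  qed
  have clk: "\<And>x k. x \<in> SS \<Longrightarrow> (D ^^ k) x \<in> SS"
  proof -
    fix x k assume "x \<in> SS" then show "(D ^^ k) x \<in> SS" by (induction k) (auto intro: cl)
  qed
  have RS: "R \<subseteq> SS \<times> SS" unfolding R_def SS_def stem_sim_def by blast
  have fwd: "\<And>a b. (a, b) \<in> R \<Longrightarrow> (D a, D b) \<in> R"
    unfolding R_def D_def using sim_fwd[OF S] by blast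
  have bwd: "\<And>a b. (D a, D b) \<in> R \<Longrightarrow> (a, b) \<in> R"
  proof -
    fix a b assume h: "(D a, D b) \<in> R"
    obtain P where P: "P > 0" "(D ^^ P) a = a" "(D ^^ P) b = b"
      using period2[OF injD lenD] by blast
    have "((D ^^ (P - 1)) (D a), (D ^^ (P - 1)) (D b)) \<in> R"
      using sim_fwdk[OF S h[unfolded R_def D_def], of "P - 1"] unfolding R_def D_def by simp
    moreover have "\<And>x. (D ^^ (P - 1)) (D x) = (D ^^ P) x"
    proof -
      fix x
      have sp: "Suc (P - 1) = P" using P(1) by simp
      have "(D ^^ (P - 1)) (D x) = (D ^^ Suc (P - 1)) x" by (simp only: funpow_Suc_right o_apply)
      then show "(D ^^ (P - 1)) (D x) = (D ^^ P) x" by (simp only: sp)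
    qed
    ultimately show "(a, b) \<in> R" using P by simp
  qed
  have surjD: "\<And>y. y \<in> SS \<Longrightarrow> \<exists>x\<in>SS. y = D x"
  proof -
    fix y assume y: "y \<in> SS"
    obtain p where p: "p > 0" "(D ^^ p) y = y" using period[OF injD lenD] by blast
    have sp: "Suc (p - 1) = p" using p(1) by simp
    have "D ((D ^^ (p - 1)) y) = (D ^^ Suc (p - 1)) y" by simp
    then have "D ((D ^^ (p - 1)) y) = y" using p(2) by (simp only: sp)
    then show "\<exists>x\<in>SS. y = D x" using clk[OF y, of "p - 1"] by force
  qed
  have img: "\<And>x. x \<in> SS \<Longrightarrow> D ` (R `` {x}) = R `` {D x}"
  proof -
    fix x assume x: "x \<in> SS"
    show "D ` (R `` {x}) = R `` {D x}"
    proof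
      show "D ` (R `` {x}) \<subseteq> R `` {D x}" using fwd by blast
    next
      show "R `` {D x} \<subseteq> D ` (R `` {x})"
      proof
        fix z assume z: "z \<in> R `` {D x}"
        then have "z \<in> SS" using RS by blast
        then obtain y where y: "y \<in> SS" "z = D y" using surjD by blast
        then have "(x, y) \<in> R" using z bwd by blast
        then show "z \<in> D ` (R `` {x})" using y by blast
      qed
    qed
  qed
  define A where "A = {K \<in> SS // R. \<exists>w\<in>K. prefix u w}"
  define B where "B = {K \<in> SS // R. \<exists>w\<in>K. prefix (D u) w}"
  have pre: "\<And>w. prefix (D u) (D w) \<longleftrightarrow> prefix u w"
    unfolding D_def using prefix_deltaQ[OF rev] by blast
  have "bij_betw (image D) A B"
  proof (rule bij_betw_imageI)
    show "inj_on (image D) A" using injD by (meson inj_image_eq_iff inj_onI)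
    show "image D ` A = B"
    proof
      show "image D ` A \<subseteq> B"
      proof
        fix K' assume "K' \<in> image D ` A"
        then obtain K where K: "K \<in> A" "K' = D ` K" by blast
        then obtain x where x: "x \<in> SS" "K = R `` {x}" unfolding A_def quotient_def by blast
        from K obtain w where w: "w \<in> K" "prefix u w" unfolding A_def by blast
        have "K' = R `` {D x}" using K x img by simp
        moreover have "D w \<in> K'" using K w by blast
        ultimately show "K' \<in> B" unfolding B_def quotient_def using cl[OF x(1)] w pre by blast
      qed
    next
      show "B \<subseteq> image D ` A"
      proof
        fix K' assume K': "K' \<in> B"
        then obtain y where y: "y \<in> SS" "K' = R `` {y}" unfolding B_def quotient_def by blast
        then obtain x where x: "x \<in> SS" "y = D x" using surjD by blast
        have KK: "K' = D ` (R `` {x})" using img x y by simp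
        from K' obtain w' where w': "w' \<in> K'" "prefix (D u) w'" unfolding B_def by blast
        then obtain w where w: "w \<in> R `` {x}" "w' = D w" using KK by blast
        have "prefix u w" using w w' pre by simp
        then have "R `` {x} \<in> A" unfolding A_def quotient_def using x w by blast
        then show "K' \<in> image D ` A" using KK by blast
      qed
    qed
  qed
  then have "card A = card B" by (rule bij_betw_same_card)
  then show ?thesis unfolding num_classes_def A_def B_def D_def R_def SS_def by simp
qed

lemma trunk_levels:
  assumes ip: "initial_path delta rho e"
  shows "j < length e \<Longrightarrow> (\<forall>w\<in>fst (e ! j). length w = j) \<and> (\<forall>w\<in>snd (e ! j). length w = Suc j)"
proof (induction j)
  have te: "\<And>j. j < length e \<Longrightarrow> tree_edge delta rho (e ! j)"
    using ip unfolding initial_path_def path_in_def by (meson nth_mem)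
  have sndlen: "\<And>j. j < length e \<Longrightarrow> \<forall>w\<in>fst (e ! j). length w = j \<Longrightarrow> \<forall>w\<in>snd (e ! j). length w = Suc j"
  proof -
    fix j assume j: "j < length e" and f: "\<forall>w\<in>fst (e ! j). length w = j"
    obtain w x where wx: "e ! j = (Defs.comp delta rho w, Defs.comp delta rho (w @ [x]))"
      using te[OF j] unfolding tree_edge_def by blast
    have "length w = j" using f wx self_comp by fastforce
    then show "\<forall>w\<in>snd (e ! j). length w = Suc j" using wx comp_len by fastforce
  qed
  {
    case 0
    have "e \<noteq> []" using ip unfolding initial_path_def path_in_def by blast
    then have "fst (e ! 0) = {[]}" using ip unfolding initial_path_def by (simp add: hd_conv_nth)
    then show ?case using sndlen 0 by auto
  next
    case (Suc j)
    have "fst (e ! Suc j) = snd (e ! j)"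
      using ip Suc.prems unfolding initial_path_def path_in_def by blast
    then have "\<forall>w\<in>fst (e ! Suc j). length w = Suc j" using Suc by auto
    then show ?case using sndlen Suc.prems by blast
  }
qed

lemma trunk_step:
  assumes jt: "jungle_trunk delta rho e n" and jw: "jword delta rho e u"
    and k: "k < length u" and un: "length u < n"
  shows "Defs.comp delta rho (take (Suc k) u) = snd (e ! k)"
proof -
  have ip: "initial_path delta rho e" and le: "length e = n"
    using jt unfolding jungle_trunk_def by auto
  have ne: "e \<noteq> []" using ip unfolding initial_path_def path_in_def by blast
  let ?f = "(Defs.comp delta rho (take k u), Defs.comp delta rho (take (Suc k) u))"
  have f: "?f \<in> jungle_edges delta rho e" using jw k unfolding jword_def by blast
  have lastlen: "\<forall>v\<in>snd (last e). length v = n"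
  proof -
    have n0: "n - 1 < n" using ne le by auto
    have "last e = e ! (n - 1)" using ne le by (simp add: last_conv_nth)
    then show ?thesis using trunk_levels[OF ip n0[folded le]] le n0 by simp
  qed
  have fl: "\<forall>w\<in>fst ?f. length w = k" using comp_len k by fastforce
  have "\<not> (\<exists>w \<in> fst ?f. \<exists>v \<in> snd (last e). prefix v w)"
  proof
    assume "\<exists>w \<in> fst ?f. \<exists>v \<in> snd (last e). prefix v w"
    then obtain w v where "w \<in> fst ?f" "v \<in> snd (last e)" "prefix v w" by blast
    then have "n \<le> k" using fl lastlen prefix_length_le by fastforce
    then show False using k un by simp
  qed
  then have "?f \<in> set e" using f unfolding jungle_edges_def by blast
  then obtain j where j: "j < length e" "?f = e ! j" by (metis in_set_conv_nth)
  have "take k u \<in> fst ?f" using self_comp by simp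
  then have "take k u \<in> fst (e ! j)" using j(2) by simp
  then have "length (take k u) = j" using trunk_levels[OF ip j(1)] by blast
  then have "j = k" using k by simp
  then show ?thesis using j by (metis snd_conv)
qed

lemma trunk_comp:
  assumes jt: "jungle_trunk delta rho e n" and jw: "jword delta rho e u" "jword delta rho e u'"
    and un: "length u < n" and l: "length u' = length u"
  shows "Defs.comp delta rho u = Defs.comp delta rho u'"
proof (cases "u = []")
  case True then show ?thesis using l by simp
next
  case False
  define k where "k = length u - 1"
  have k: "k < length u" "Suc k = length u" using False unfolding k_def by auto
  have "Defs.comp delta rho (take (Suc k) u) = snd (e ! k)"
    using trunk_step[OF jt jw(1) k(1) un] .
  moreover have "Defs.comp delta rho (take (Suc k) u') = snd (e ! k)"
    using trunk_step[OF jt jw(2), of k] k l un by simp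
  moreover have "take (Suc k) u' = u'" "take (Suc k) u = u" using k l by auto
  ultimately show ?thesis using k l by simp
qed

theorem corollary5p18:
  fixes delta :: "'a::finite \<Rightarrow> 'q::finite \<Rightarrow> 'q"
    and rho :: "'q \<Rightarrow> 'a \<Rightarrow> 'a"
    and e :: "'q edge list" and n :: nat and u u' :: "'q list"
  assumes "connected_aut delta"
    and "bireversible delta rho"
    and "no_active_self_liftable_branch delta rho"
    and "jungle_trunk delta rho e n"
    and "jword delta rho e u" and "jword delta rho e u'"
    and "length u < n" and "length u' = length u"
  shows "num_classes delta rho e u = num_classes delta rho e u'"
proof -
  have rev: "reversible delta" using assms(2) unfolding bireversible_def by blast
  have ip: "initial_path delta rho e" using assms(4) unfolding jungle_trunk_def by blast
  have ne: "e \<noteq> []" using ip unfolding initial_path_def path_in_def by blast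
  have "tree_edge delta rho (last e)" using ip ne unfolding initial_path_def path_in_def by simp
  then obtain w x where "last e = (Defs.comp delta rho w, Defs.comp delta rho (w @ [x]))"
    unfolding tree_edge_def by blast
  then have S: "stems e = Defs.comp delta rho (w @ [x])" unfolding stems_def by simp
  have "Defs.comp delta rho u = Defs.comp delta rho u'" using trunk_comp assms(4-8) by blast
  then have "u' \<in> Defs.comp delta rho u" using self_comp by metis
  then have "(u, u') \<in> EE delta rho" unfolding comp_EE by blast
  then have "(u, u') \<in> ({(v, deltaQ delta rho i v) | v i. True} \<union> {(v, deltaQ delta rho i v) | v i. True}\<inverse>)\<^sup>*"
    unfolding EE_def by (simp add: Let_def)
  then show ?thesis
  proof (induction rule: rtrancl_induct)
    case base then show ?case by simp
  next
    case (step y z)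
    from step(2) have "num_classes delta rho e y = num_classes delta rho e z"
      using classes_inv[OF rev S] by auto
    with step(3) show ?case by simp
  qed
qed

end
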